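(* In any latin square of even order, the number of transversals is even.
   Context: A latin square of order $n$ is an $n\times n$ array of $n$ symbols in which each symbol occurs exactly once in each row and column. A transversal is a set of $n$ cells, one from each row and one from each column, no two containing the same symbol. *)

theory Defs
  imports Main
begin

definition latin_square :: "nat \<Rightarrow> 'a set \<Rightarrow> (nat \<Rightarrow> nat \<Rightarrow> 'a) \<Rightarrow> bool" where
  "latin_square n S L \<longleftrightarrow>
     finite S \<and> card S = n \<and>
     (\<forall>i<n. \<forall>j<n. L i j \<in> S) \<and>
     (\<forall>i<n. \<forall>s\<in>S. \<exists>!j. j < n \<and> L i j = s) \<and>
     (\<forall>j<n. \<forall>s\<in>S. \<exists>!i. i < n \<and> L i j = s)"

definition transversal :: "nat \<Rightarrow> (nat \<Rightarrow> nat \<Rightarrow> 'a) \<Rightarrow> (nat \<times> nat) set \<Rightarrow> bool" where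
  "transversal n L T \<longleftrightarrow>
     T \<subseteq> {0..<n} \<times> {0..<n} \<and> card T = n \<and>
     (\<forall>i<n. \<exists>!j. (i, j) \<in> T) \<and>
     (\<forall>j<n. \<exists>!i. (i, j) \<in> T) \<and>
     inj_on (\<lambda>(i, j). L i j) T"

definition transversals :: "nat \<Rightarrow> (nat \<Rightarrow> nat \<Rightarrow> 'a) \<Rightarrow> (nat \<times> nat) set set" where
  "transversals n L = {T. transversal n L T}"

end

theory Submission imports Defs "HOL-Library.Z2" "Jordan_Normal_Form.Determinant" begin
declare add_bit_eq_xor[simp del] mult_bit_eq_and[simp del]

definition K :: "nat \<Rightarrow> bit mat" where "K n = mat n n (\<lambda>(i,j). of_bool (i=j) + 1)"

lemma bit_two: "(x::bit) + x = 0"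
  by (cases x) auto

lemma bit_of_nat: "(of_nat n :: bit) = (if even n then 0 else 1)"
  by (induction n) (auto simp: bit_two)

lemma K_sq: assumes "even n" shows "K n * K n = 1\<^sub>m n"
proof (rule eq_matI)
  fix i j assume i: "i < dim_row (1\<^sub>m n)" and j: "j < dim_col (1\<^sub>m n)"
  hence ij: "i < n" "j < n" by auto
  have "(K n * K n) $$ (i,j) = (\<Sum>k\<in>{0..<n}. (of_bool (i=k) + 1) * (of_bool (k=j) + (1::bit)))"
    using ij unfolding K_def by (simp add: scalar_prod_def)
  also have "\<dots> = (\<Sum>k\<in>{0..<n}. of_bool (i=k) * of_bool (k=j) + of_bool (i=k) + of_bool (k=j) + 1)"
    by (simp add: algebra_simps)
  also have "\<dots> = of_bool (i=j) + 1 + 1 + of_nat n"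
    using ij by (simp add: sum.distrib)
  also have "\<dots> = of_bool (i=j)"
    using assms by (simp add: bit_two add.assoc bit_of_nat)
  finally show "(K n * K n) $$ (i,j) = 1\<^sub>m n $$ (i,j)" using ij by simp
qed (auto simp: K_def)

lemma det_K: assumes "even n" shows "det (K n) = 1"
proof -
  have c: "K n \<in> carrier_mat n n" by (simp add: K_def)
  have "det (K n) * det (K n) = 1" using det_mult[OF c c] K_sq[OF assms] by simp
  thus ?thesis by (cases "det (K n)") auto
qed

lemma signof_bit: "(signof p :: bit) = 1"
  by (simp add: sign_def)

definition Mat :: "nat \<Rightarrow> (nat\<Rightarrow>nat\<Rightarrow>'a) \<Rightarrow> 'a set \<Rightarrow> bit mat" where
  "Mat n L A = mat n n (\<lambda>(i,j). of_bool (L i j \<in> A))"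

lemma det_Mat: "det (Mat n L A) = (\<Sum>p\<in>{p. p permutes {0..<n}}. of_bool (\<forall>i\<in>{0..<n}. L i (p i) \<in> A))"
  unfolding det_def Mat_def
  apply (simp add: signof_bit)
  apply (rule sum.cong, simp)
  apply (subst prod.cong[where B="{0..<n}" and h="\<lambda>i. of_bool (L i (_ i) \<in> A)"])
  apply simp
   apply (simp add: permutes_in_image)
  apply simp
  done

locale LS =
  fixes n :: nat and S :: "'a set" and L :: "nat \<Rightarrow> nat \<Rightarrow> 'a"
  assumes rows: "\<And>i. i < n \<Longrightarrow> bij_betw (L i) {0..<n} S"
    and fin: "finite S" and cardS: "card S = n" and ev: "even n" and pos: "n > 0"
begin

lemma row_card: assumes "i < n" "A \<subseteq> S"
  shows "card ({0..<n} \<inter> {j. L i j \<in> A}) = card A"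
proof -
  have b: "bij_betw (L i) {0..<n} S" using rows assms(1) .
  have "bij_betw (L i) ({0..<n} \<inter> {j. L i j \<in> A}) A"
    apply (rule bij_betw_subset[OF b], simp)
    using b assms(2) unfolding bij_betw_def by auto
  from bij_betw_same_card[OF this] show ?thesis by simp
qed

lemma row_sum: assumes "i < n" "A \<subseteq> S"
  shows "(\<Sum>k\<in>{0..<n}. (of_bool (L i k \<in> A) :: bit)) = of_nat (card A)"
  using row_card[OF assms] by (simp add: sum_of_bool_eq)

lemma det_even: assumes "A \<subseteq> S" "even (card A)" shows "det (Mat n L A) = 0"
proof -
  have c: "Mat n L A \<in> carrier_mat n n" by (simp add: Mat_def)
  let ?v = "vec n (\<lambda>_. 1::bit)"
  have "?v \<noteq> 0\<^sub>v n" using pos by (metis index_vec index_zero_vec(1) zero_neq_one)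
  moreover have "Mat n L A *\<^sub>v ?v = 0\<^sub>v n"
  proof (rule eq_vecI)
    fix i assume "i < dim_vec (0\<^sub>v n :: bit vec)"
    hence i: "i < n" by simp
    have "(Mat n L A *\<^sub>v ?v) $ i = (\<Sum>k\<in>{0..<n}. (of_bool (L i k \<in> A) :: bit))"
      using i by (simp add: Mat_def scalar_prod_def)
    also have "\<dots> = 0" using row_sum[OF i assms(1)] assms(2) by (simp add: bit_of_nat)
    finally show "(Mat n L A *\<^sub>v ?v) $ i = 0\<^sub>v n $ i" using i by simp
  qed (simp add: Mat_def)
  moreover have "?v \<in> carrier_vec n" by simp
  ultimately show ?thesis using det_0_iff_vec_prod_zero[OF c] by blast
qed

lemma Mat_compl: assumes "A \<subseteq> S" "odd (card A)" shows "Mat n L (S - A) = Mat n L A * K n"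
proof (rule eq_matI)
  fix i j assume "i < dim_row (Mat n L A * K n)" "j < dim_col (Mat n L A * K n)"
  hence ij: "i < n" "j < n" by (auto simp: Mat_def K_def)
  have inS: "L i j \<in> S" using rows[OF ij(1)] ij(2) unfolding bij_betw_def by auto
  have s1: "(\<Sum>k\<in>{0..<n}. of_bool (L i k \<in> A) * of_bool (k=j)) = (of_bool (L i j \<in> A) :: bit)"
  proof -
    have eq: "\<And>k. of_bool (L i k \<in> A) * of_bool (k=j) = (if k = j then of_bool (L i j \<in> A) else (0::bit))"
      by auto
    show ?thesis unfolding eq using ij by simp
  qed
  have s2: "(\<Sum>k\<in>{0..<n}. (of_bool (L i k \<in> A) :: bit)) = 1"
    using row_sum[OF ij(1) assms(1)] assms(2) by (simp only: bit_of_nat) simp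
  have "(Mat n L A * K n) $$ (i,j) = (\<Sum>k\<in>{0..<n}. of_bool (L i k \<in> A) * (of_bool (k=j) + (1::bit)))"
    using ij unfolding K_def Mat_def by (simp add: scalar_prod_def)
  also have "\<dots> = (\<Sum>k\<in>{0..<n}. of_bool (L i k \<in> A) * of_bool (k=j)) + (\<Sum>k\<in>{0..<n}. (of_bool (L i k \<in> A) :: bit))"
    by (simp add: algebra_simps sum.distrib)
  also have "\<dots> = of_bool (L i j \<in> A) + 1" using s1 s2 by simp
  also have "\<dots> = Mat n L (S - A) $$ (i,j)"
    using ij inS by (cases "L i j \<in> A") (simp_all add: Mat_def bit_two)
  finally show "Mat n L (S - A) $$ (i,j) = (Mat n L A * K n) $$ (i,j)" ..
qed (auto simp: Mat_def K_def)

lemma det_compl: assumes "A \<subseteq> S" shows "det (Mat n L (S - A)) = det (Mat n L A)"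
proof (cases "even (card A)")
  case True
  have "card (S - A) = n - card A" using assms fin cardS by (simp add: card_Diff_subset finite_subset)
  hence "even (card (S - A))" using True ev assms fin cardS
    by (metis card_mono dvd_diff_nat)
  thus ?thesis using det_even[OF assms True] det_even[of "S - A"] by auto
next
  case False
  have c: "Mat n L A \<in> carrier_mat n n" "K n \<in> carrier_mat n n" by (auto simp: Mat_def K_def)
  show ?thesis using Mat_compl[OF assms False] det_mult[OF c] det_K[OF ev] by simp
qed

lemma pair_sum: "(\<Sum>A\<in>Pow S. det (Mat n L A)) = 0"
proof -
  obtain s0 where s0: "s0 \<in> S" using pos cardS by (metis card.empty ex_in_conv less_irrefl)
  let ?P1 = "{A\<in>Pow S. s0 \<notin> A}" and ?P2 = "{A\<in>Pow S. s0 \<in> A}"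
  let ?f = "\<lambda>A. det (Mat n L A)"
  have fP: "finite (Pow S)" using fin by simp
  have split: "Pow S = ?P1 \<union> ?P2" by auto
  have "sum ?f (Pow S) = sum ?f ?P1 + sum ?f ?P2"
    by (subst split, rule sum.union_disjoint) (use fP in auto)
  moreover have "sum ?f ?P2 = sum ?f ?P1"
  proof -
    have b: "bij_betw (\<lambda>A. S - A) ?P1 ?P2"
      by (rule bij_betw_byWitness[where f'="\<lambda>A. S - A"]) (use s0 in auto)
    have "sum ?f ?P2 = sum (?f \<circ> (\<lambda>A. S - A)) ?P1"
      using sum.reindex_bij_betw[OF b, of ?f] by simp
    also have "\<dots> = sum ?f ?P1"
      by (rule sum.cong) (auto intro: det_compl)
    finally show ?thesis .
  qed
  ultimately show ?thesis by (simp add: bit_two)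
qed

lemma card_supsets: assumes "B \<subseteq> S"
  shows "card {A\<in>Pow S. B \<subseteq> A} = 2 ^ (card S - card B)"
proof -
  have "bij_betw (\<lambda>A. A - B) {A\<in>Pow S. B \<subseteq> A} (Pow (S - B))"
    by (rule bij_betw_byWitness[where f'="\<lambda>C. C \<union> B"]) (use assms in auto)
  hence "card {A\<in>Pow S. B \<subseteq> A} = card (Pow (S - B))" by (rule bij_betw_same_card)
  also have "\<dots> = 2 ^ card (S - B)" using fin assms by (simp add: card_Pow)
  also have "card (S - B) = card S - card B" using fin assms by (simp add: card_Diff_subset finite_subset)
  finally show ?thesis .
qed

lemma good_sum: assumes p: "p permutes {0..<n}"
  shows "(of_bool (inj_on (\<lambda>i. L i (p i)) {0..<n}) :: bit)
       = (\<Sum>A\<in>Pow S. of_bool (\<forall>i\<in>{0..<n}. L i (p i) \<in> A))"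
proof -
  let ?im = "(\<lambda>i. L i (p i)) ` {0..<n}"
  have imS: "?im \<subseteq> S"
  proof
    fix x assume "x \<in> ?im"
    then obtain i where i: "i < n" "x = L i (p i)" by auto
    have "p i < n" using p i(1) by (simp add: permutes_in_image)
    thus "x \<in> S" using rows[OF i(1)] i(2) unfolding bij_betw_def by auto
  qed
  have "(\<Sum>A\<in>Pow S. (of_bool (\<forall>i\<in>{0..<n}. L i (p i) \<in> A) :: bit))
      = (\<Sum>A\<in>Pow S. of_bool (?im \<subseteq> A))" by (rule sum.cong) auto
  also have "\<dots> = of_nat (card (Pow S \<inter> {A. ?im \<subseteq> A}))"
    using fin by (simp add: sum_of_bool_eq)
  also have "Pow S \<inter> {A. ?im \<subseteq> A} = {A\<in>Pow S. ?im \<subseteq> A}" by auto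
  also have "card \<dots> = 2 ^ (n - card ?im)" using card_supsets[OF imS] cardS by simp
  also have "(of_nat (2 ^ (n - card ?im)) :: bit) = of_bool (inj_on (\<lambda>i. L i (p i)) {0..<n})"
  proof -
    have le: "card ?im \<le> n" using card_mono[OF fin imS] cardS by simp
    have "inj_on (\<lambda>i. L i (p i)) {0..<n} \<longleftrightarrow> card ?im = n"
      using inj_on_iff_eq_card[of "{0..<n}"] by simp
    thus ?thesis using le by (auto simp: bit_of_nat)
  qed
  finally show ?thesis ..
qed

lemma good_even: "even (card {p. p permutes {0..<n} \<and> inj_on (\<lambda>i. L i (p i)) {0..<n}})"
proof -
  let ?P = "{p. p permutes {0..<n}}"
  have fP: "finite ?P" by (simp add: finite_permutations)
  have "(of_nat (card {p. p permutes {0..<n} \<and> inj_on (\<lambda>i. L i (p i)) {0..<n}}) :: bit)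
     = (\<Sum>p\<in>?P. of_bool (inj_on (\<lambda>i. L i (p i)) {0..<n}))"
    using fP by (simp add: sum_of_bool_eq Collect_conj_eq Int_commute)
  also have "\<dots> = (\<Sum>p\<in>?P. \<Sum>A\<in>Pow S. of_bool (\<forall>i\<in>{0..<n}. L i (p i) \<in> A))"
    by (rule sum.cong) (simp_all add: good_sum)
  also have "\<dots> = (\<Sum>A\<in>Pow S. \<Sum>p\<in>?P. of_bool (\<forall>i\<in>{0..<n}. L i (p i) \<in> A))"
    by (rule sum.swap)
  also have "\<dots> = (\<Sum>A\<in>Pow S. det (Mat n L A))"
    by (rule sum.cong) (simp_all add: det_Mat)
  also have "\<dots> = 0" by (rule pair_sum)
  finally show ?thesis by (simp add: bit_of_nat split: if_splits)
qed

end

definition graph :: "nat \<Rightarrow> (nat \<Rightarrow> nat) \<Rightarrow> (nat \<times> nat) set" where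
  "graph n p = (\<lambda>i. (i, p i)) ` {0..<n}"

lemma trans_card:
  "card (transversals n L) = card {p. p permutes {0..<n} \<and> inj_on (\<lambda>i. L i (p i)) {0..<n}}"
proof -
  let ?P = "{p. p permutes {0..<n} \<and> inj_on (\<lambda>i. L i (p i)) {0..<n}}"
  have "bij_betw (graph n) ?P (transversals n L)"
    unfolding bij_betw_def
  proof (intro conjI)
    show "inj_on (graph n) ?P"
    proof (rule inj_onI)
      fix p q assume p: "p \<in> ?P" and q: "q \<in> ?P" and e: "graph n p = graph n q"
      show "p = q"
      proof
        fix x show "p x = q x"
        proof (cases "x < n")
          case True
          hence "(x, p x) \<in> graph n p" unfolding graph_def by auto
          hence "(x, p x) \<in> graph n q" using e by simp
          thus ?thesis unfolding graph_def by auto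
        next
          case False
          thus ?thesis using p q by (auto simp: permutes_def)
        qed
      qed
    qed
    show "graph n ` ?P = transversals n L"
    proof
      show "graph n ` ?P \<subseteq> transversals n L"
      proof
        fix T assume "T \<in> graph n ` ?P"
        then obtain p where p: "p permutes {0..<n}" and inj: "inj_on (\<lambda>i. L i (p i)) {0..<n}"
          and T: "T = graph n p" by auto
        have pin: "\<And>i. i < n \<Longrightarrow> p i < n" using p by (simp add: permutes_in_image)
        have "T \<subseteq> {0..<n} \<times> {0..<n}" using pin unfolding T graph_def by auto
        moreover have "card T = n" unfolding T graph_def
          by (subst card_image) (auto intro: inj_onI)
        moreover have "\<forall>i<n. \<exists>!j. (i, j) \<in> T"
        proof (intro allI impI)
          fix i assume i: "i < n"
          show "\<exists>!j. (i, j) \<in> T"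
          proof (rule ex1I[where a="p i"])
            show "(i, p i) \<in> T" unfolding T graph_def using i by auto
            fix j assume "(i, j) \<in> T"
            thus "j = p i" unfolding T graph_def by auto
          qed
        qed
        moreover have "\<forall>j<n. \<exists>!i. (i, j) \<in> T"
        proof (intro allI impI)
          fix j assume j: "j < n"
          obtain i where "i < n" "p i = j"
            using p j by (metis atLeastLessThan_iff permutes_def zero_le)
          moreover have "inj p" using p by (rule permutes_inj)
          ultimately show "\<exists>!i. (i, j) \<in> T"
          proof (intro ex1I[where a=i])
            show "(i, j) \<in> T" unfolding T graph_def using \<open>i < n\<close> \<open>p i = j\<close> by auto
            fix k assume "(k, j) \<in> T"
            hence "p k = j" unfolding T graph_def by auto
            thus "k = i" using \<open>p i = j\<close> \<open>inj p\<close> by (metis injD)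
          qed
        qed
        moreover have "inj_on (\<lambda>(i, j). L i j) T"
          using inj unfolding T graph_def inj_on_def by auto
        ultimately show "T \<in> transversals n L" unfolding transversals_def transversal_def by auto
      qed
      show "transversals n L \<subseteq> graph n ` ?P"
      proof
        fix T assume "T \<in> transversals n L"
        hence sub: "T \<subseteq> {0..<n} \<times> {0..<n}" and row: "\<forall>i<n. \<exists>!j. (i, j) \<in> T"
          and col: "\<forall>j<n. \<exists>!i. (i, j) \<in> T" and injT: "inj_on (\<lambda>(i, j). L i j) T"
          unfolding transversals_def transversal_def by auto
        define p where "p i = (if i < n then (THE j. (i, j) \<in> T) else i)" for i
        have pT: "\<And>i. i < n \<Longrightarrow> (i, p i) \<in> T"
        proof -
          fix i assume i: "i < n"
          hence "\<exists>!j. (i, j) \<in> T" using row by simp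
          from theI'[OF this] show "(i, p i) \<in> T" using i by (simp add: p_def)
        qed
        have pu: "\<And>i j. (i, j) \<in> T \<Longrightarrow> p i = j"
        proof -
          fix i j assume ij: "(i, j) \<in> T"
          hence "i < n" using sub by auto
          hence "\<exists>!j. (i, j) \<in> T" using row by simp
          moreover have "(i, p i) \<in> T" using pT \<open>i < n\<close> by simp
          ultimately show "p i = j" using ij by (metis (no_types))
        qed
        have pin: "\<And>i. i < n \<Longrightarrow> p i < n"
        proof -
          fix i assume "i < n"
          from subsetD[OF sub pT[OF this]] show "p i < n" by simp
        qed
        have injp: "inj_on p {0..<n}"
        proof (rule inj_onI)
          fix a b assume a: "a \<in> {0..<n}" and b: "b \<in> {0..<n}" and e: "p a = p b"
          have "(a, p a) \<in> T" using pT[of a] a by simp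
          have "(b, p a) \<in> T" using pT[of b] b by (simp add: e)
          moreover have "p a < n" using pin a by auto
          ultimately have "\<exists>!i. (i, p a) \<in> T" using col by simp
          thus "a = b" using \<open>(a, p a) \<in> T\<close> \<open>(b, p a) \<in> T\<close> by (metis (no_types))
        qed
        have img: "p ` {0..<n} = {0..<n}"
          by (rule endo_inj_surj) (use pin injp in auto)
        have perm: "p permutes {0..<n}"
          by (rule bij_imp_permutes) (use injp img in \<open>auto simp: bij_betw_def p_def\<close>)
        have inj: "inj_on (\<lambda>i. L i (p i)) {0..<n}"
        proof (rule inj_onI)
          fix a b assume a: "a \<in> {0..<n}" and b: "b \<in> {0..<n}" and e: "L a (p a) = L b (p b)"
          have "(a, p a) = (b, p b)"
            by (rule inj_onD[OF injT]) (use e pT[of a] pT[of b] a b in simp_all)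
          thus "a = b" by simp
        qed
        have "T = graph n p"
        proof
          show "T \<subseteq> graph n p" unfolding graph_def
          proof
            fix x assume x: "x \<in> T"
            obtain i j where x': "x = (i, j)" by force
            have "i < n" using sub x x' by auto
            moreover have "p i = j" using pu x x' by auto
            ultimately show "x \<in> (\<lambda>i. (i, p i)) ` {0..<n}" using x' by auto
          qed
          show "graph n p \<subseteq> T" unfolding graph_def using pT by auto
        qed
        thus "T \<in> graph n ` ?P" using perm inj by auto
      qed
    qed
  qed
  from bij_betw_same_card[OF this] show ?thesis by simp
qed

theorem theorem1p3:
  fixes n :: nat and S :: "'a set" and L :: "nat \<Rightarrow> nat \<Rightarrow> 'a"
  assumes "latin_square n S L" and "even n" and "n > 0"
  shows "even (card (transversals n L))"
proof -
  note LSd = assms(1)[unfolded latin_square_def]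
  have finS: "finite S" using LSd by (elim conjE) assumption
  have cS: "card S = n" using LSd by (elim conjE) assumption
  have inS: "\<forall>i<n. \<forall>j<n. L i j \<in> S" using LSd by (elim conjE) assumption
  have rowU: "\<forall>i<n. \<forall>s\<in>S. \<exists>!j. j < n \<and> L i j = s" using LSd by (elim conjE) assumption
  have "LS n S L"
  proof
    fix i assume i: "i < n"
    show "bij_betw (L i) {0..<n} S"
      unfolding bij_betw_def
    proof
      show "inj_on (L i) {0..<n}"
      proof (rule inj_onI)
        fix a b assume a: "a \<in> {0..<n}" and b: "b \<in> {0..<n}" and e: "L i a = L i b"
        have "L i a \<in> S" using inS i a by simp
        hence "\<exists>!j. j < n \<and> L i j = L i a" using rowU i by simp
        moreover have "a < n \<and> L i a = L i a" "b < n \<and> L i b = L i a" using a b e by auto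
        ultimately show "a = b" by (metis (no_types))
      qed
      show "L i ` {0..<n} = S"
      proof
        show "L i ` {0..<n} \<subseteq> S" using inS i by auto
        show "S \<subseteq> L i ` {0..<n}"
        proof
          fix s assume s: "s \<in> S"
          have "\<exists>!j. j < n \<and> L i j = s" using rowU i s by simp
          then obtain j where "j < n" "L i j = s" by (metis (no_types))
          thus "s \<in> L i ` {0..<n}" by auto
        qed
      qed
    qed
  next
    show "finite S" "card S = n" using finS cS by auto
    show "even n" "0 < n" using assms(2,3) by auto
  qed
  thus ?thesis unfolding trans_card by (rule LS.good_even)
qed

end
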